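(* Let $\mu=(p,q,r,s)\in\mathbb{R}^4$ with $(p,q,r)\neq(0,0,0)$, and let $\alpha=\max\{|p|,|q|,|r|\}/2$. There exists a $\mu$-Markoff map $\phi\in\Phi_\mu$ such that $\Omega_\phi(2+\alpha)=\{X\in\Omega:|\phi(X)|\le 2+\alpha\}$ is finite.
   Context: Let $\Sigma$ be a countably infinite simplicial tree, properly embedded in the plane, all of whose vertices have degree $3$. A complementary region is the closure of a connected component of the complement of $\Sigma$; $\Omega$ is the set of complementary regions, $E(\Sigma)$ the set of edges. Every edge $e$ is the intersection of exactly two regions $X,Y$, and its two endpoints lie on two further regions $Z,W$ respectively; write $e\leftrightarrow(X,Y;Z,W)$. Three regions meet at each vertex. Fix a coloring $\mathcal C:\Omega\cup E(\Sigma)\to\{1,2,3\}$ such that for every $e\leftrightarrow(X,Y;Z,W)$, $\mathcal C(e)=\mathcal C(Z)=\mathcal C(W)$ and $\mathcal C(e),\mathcal C(X),\mathcal C(Y)$ are pairwise distinct; $\Omega_i$, $E_i$ denote regions/edges of color $i$. For $\mu=(p,q,r,s)$, a $\mu$-Markoff map is $\phi:\Omega\to\mathbb{C}$ such that (i) at every vertex with regions $X\in\Omega_1,Y\in\Omega_2,Z\in\Omega_3$, $x^2+y^2+z^2+xyz=px+qy+rz+s$ where $x=\phi(X)$, etc.; (ii) for $e\in E_1$, $e\leftrightarrow(Y,Z;X,X')$: $\phi(X)+\phi(X')=p-\phi(Y)\phi(Z)$; for $e\in E_2$, $e\leftrightarrow(X,Z;Y,Y')$: $\phi(Y)+\phi(Y')=q-\phi(X)\phi(Z)$;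 for $e\in E_3$, $e\leftrightarrow(X,Y;Z,Z')$: $\phi(Z)+\phi(Z')=r-\phi(X)\phi(Y)$. $\Phi_\mu$ is the set of such maps. *)

theory Defs
  imports Complex_Main "HOL-Computational_Algebra.Primes"
begin

text \<open>Concrete combinatorial model of the trivalent planar tree Sigma (the dual tree of
the Farey tessellation). Complementary regions are the points of the rational projective
line, represented by coprime integer pairs (a,b) normalised by b > 0, or (a,b) = (1,0).
Two regions share an edge iff |ad - bc| = 1. The edge between X=(a,b) and Y=(c,d) has
its two endpoints on the further regions Z = [a+c : b+d] and W = [a-c : b-d].\<close>

type_synonym region = "int \<times> int"

definition Omega :: "region set" where
  "Omega = {(a, b). coprime a b \<and> (0 < b \<or> (b = 0 \<and> a = 1))}"

definition adj :: "region \<Rightarrow> region \<Rightarrow> bool" where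
  "adj X Y \<longleftrightarrow> \<bar>fst X * snd Y - snd X * fst Y\<bar> = 1"

definition normr :: "region \<Rightarrow> region" where
  "normr X = (if snd X < 0 \<or> (snd X = 0 \<and> fst X < 0) then (- fst X, - snd X) else X)"

definition radd :: "region \<Rightarrow> region \<Rightarrow> region" where
  "radd X Y = normr (fst X + fst Y, snd X + snd Y)"

definition rsub :: "region \<Rightarrow> region \<Rightarrow> region" where
  "rsub X Y = normr (fst X - fst Y, snd X - snd Y)"

definition Edges :: "region set set" where
  "Edges = {{X, Y} | X Y. X \<in> Omega \<and> Y \<in> Omega \<and> adj X Y}"

definition edge_rel :: "region set \<Rightarrow> region \<Rightarrow> region \<Rightarrow> region \<Rightarrow> region \<Rightarrow> bool" where
  "edge_rel e X Y Z W \<longleftrightarrow> X \<in> Omega \<and> Y \<in> Omega \<and> adj X Y \<and> e = {X, Y}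
      \<and> Z = radd X Y \<and> W = rsub X Y"

text \<open>X, Y, Z are the three regions meeting at a vertex (an endpoint of the edge X \<inter> Y).\<close>
definition at_vertex :: "region \<Rightarrow> region \<Rightarrow> region \<Rightarrow> bool" where
  "at_vertex X Y Z \<longleftrightarrow> (\<exists>e W. edge_rel e X Y Z W \<or> edge_rel e X Y W Z)"

definition valid_coloring :: "(region \<Rightarrow> nat) \<Rightarrow> (region set \<Rightarrow> nat) \<Rightarrow> bool" where
  "valid_coloring Cr Ce \<longleftrightarrow>
     (\<forall>X\<in>Omega. Cr X \<in> {1, 2, 3}) \<and> (\<forall>e\<in>Edges. Ce e \<in> {1, 2, 3}) \<and>
     (\<forall>e X Y Z W. edge_rel e X Y Z W \<longrightarrow>
        Ce e = Cr Z \<and> Ce e = Cr W \<and> Ce e \<noteq> Cr X \<and> Ce e \<noteq> Cr Y \<and> Cr X \<noteq> Cr Y)"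

definition markoff_map ::
  "(region \<Rightarrow> nat) \<Rightarrow> (region set \<Rightarrow> nat) \<Rightarrow> complex \<Rightarrow> complex \<Rightarrow> complex \<Rightarrow> complex
     \<Rightarrow> (region \<Rightarrow> complex) \<Rightarrow> bool" where
  "markoff_map Cr Ce p q r s \<phi> \<longleftrightarrow>
     (\<forall>X Y Z. at_vertex X Y Z \<and> Cr X = 1 \<and> Cr Y = 2 \<and> Cr Z = 3 \<longrightarrow>
        (\<phi> X)\<^sup>2 + (\<phi> Y)\<^sup>2 + (\<phi> Z)\<^sup>2 + \<phi> X * \<phi> Y * \<phi> Z = p * \<phi> X + q * \<phi> Y + r * \<phi> Z + s) \<and>
     (\<forall>e X Y Z W. edge_rel e X Y Z W \<and> Ce e = 1 \<longrightarrow> \<phi> Z + \<phi> W = p - \<phi> X * \<phi> Y) \<and>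
     (\<forall>e X Y Z W. edge_rel e X Y Z W \<and> Ce e = 2 \<longrightarrow> \<phi> Z + \<phi> W = q - \<phi> X * \<phi> Y) \<and>
     (\<forall>e X Y Z W. edge_rel e X Y Z W \<and> Ce e = 3 \<longrightarrow> \<phi> Z + \<phi> W = r - \<phi> X * \<phi> Y)"

end

theory Submission
  imports Defs
begin

lemma Omega_iff: "(a,b) \<in> Omega \<longleftrightarrow> coprime a b \<and> (0 < b \<or> (b = 0 \<and> a = 1))"
  by (simp add: Omega_def)

lemma det_coprime:
  fixes a b c d :: int
  assumes "\<bar>a * d - b * c\<bar> = 1"
  shows "coprime a b"
proof (rule coprimeI)
  fix k assume "k dvd a" "k dvd b"
  hence "k dvd a * d - b * c" by simp
  moreover have "a * d - b * c = 1 \<or> a * d - b * c = -1" using assms by linarith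
  ultimately have "k dvd 1" by (metis dvd_minus_iff)
  thus "is_unit k" by simp
qed

lemma snd_normr: "snd (normr v) = \<bar>snd v\<bar>"
  by (auto simp: normr_def)

lemma normr_pos: "snd v > 0 \<Longrightarrow> normr v = v"
  by (auto simp: normr_def)

lemma normr_neg: "v \<noteq> (0,0) \<Longrightarrow> normr (- fst v, - snd v) = normr v"
  by (cases v) (auto simp: normr_def)


definition dec :: "region \<Rightarrow> region \<Rightarrow> region \<Rightarrow> bool" where
  "dec w X Y \<longleftrightarrow> X \<in> Omega \<and> Y \<in> Omega \<and> snd X \<ge> 1 \<and> snd Y \<ge> 1 \<and> adj X Y \<and>
     fst X + fst Y = fst w \<and> snd X + snd Y = snd w"

lemma dvd_small_zero:
  fixes b d :: int
  assumes "b dvd d" "\<bar>d\<bar> < b" shows "d = 0"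
proof -
  obtain k where k: "d = b * k" using assms(1) by blast
  have "b > 0" using assms(2) by linarith
  show ?thesis
  proof (rule ccontr)
    assume "d \<noteq> 0"
    hence "k \<noteq> 0" using k by simp
    hence "\<bar>k\<bar> \<ge> 1" by linarith
    hence "b * \<bar>k\<bar> \<ge> b * 1" using \<open>b > 0\<close> by (intro mult_left_mono) auto
    moreover have "\<bar>d\<bar> = b * \<bar>k\<bar>" using k \<open>b > 0\<close> by (simp add: abs_mult)
    ultimately show False using assms(2) by linarith
  qed
qed

lemma dvd_between_eq:
  fixes b d :: int
  assumes "b dvd d" "0 < d" "d < 2 * b" shows "d = b"
proof -
  obtain k where k: "d = b * k" using assms(1) by blast
  have "b > 0" using assms by linarith
  have "k > 0" using k assms(2) \<open>b > 0\<close> by (simp add: zero_less_mult_iff)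
  have "k < 2" using k assms(3) \<open>b > 0\<close> by (metis mult.commute mult_less_cancel_left_pos)
  hence "k = 1" using \<open>k > 0\<close> by linarith
  thus ?thesis using k by simp
qed

lemma dec_unique:
  assumes w: "(a,b) \<in> Omega" and d1: "dec (a,b) (x1,x2) (y1,y2)" and d2: "dec (a,b) (z1,z2) (t1,t2)"
  shows "((z1,z2) = (x1,x2) \<and> (t1,t2) = (y1,y2)) \<or> ((z1,z2) = (y1,y2) \<and> (t1,t2) = (x1,x2))"
proof -
  have cop: "coprime b a" using w by (simp add: Omega_iff coprime_commute)
  have e1: "y1 = a - x1" "y2 = b - x2" and e2: "t1 = a - z1" "t2 = b - z2"
    using d1 d2 by (auto simp: dec_def)
  have b1: "1 \<le> x2" "1 \<le> y2" "1 \<le> z2" "1 \<le> t2" using d1 d2 by (auto simp: dec_def)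
  have "\<bar>x1 * y2 - x2 * y1\<bar> = 1" using d1 by (simp add: dec_def adj_def)
  hence D1: "\<bar>x1 * b - x2 * a\<bar> = 1" using e1 by (simp add: algebra_simps)
  have "\<bar>z1 * t2 - z2 * t1\<bar> = 1" using d2 by (simp add: dec_def adj_def)
  hence D2: "\<bar>z1 * b - z2 * a\<bar> = 1" using e2 by (simp add: algebra_simps)
  consider "x1 * b - x2 * a = z1 * b - z2 * a" | "x1 * b - x2 * a = - (z1 * b - z2 * a)"
    using D1 D2 by linarith
  thus ?thesis
  proof cases
    case 1
    hence eq: "(x2 - z2) * a = b * (x1 - z1)" by (simp add: algebra_simps)
    hence "b dvd (x2 - z2) * a" by (metis dvd_triv_left)
    hence "b dvd (x2 - z2)" using cop by (simp add: coprime_dvd_mult_left_iff)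
    moreover have "\<bar>x2 - z2\<bar> < b" using b1 e1 e2 by linarith
    ultimately have "x2 - z2 = 0" by (rule dvd_small_zero)
    hence "x2 = z2" by simp
    moreover have "b > 0" using b1 e1 by linarith
    ultimately have "x1 = z1" using eq by simp
    thus ?thesis using \<open>x2 = z2\<close> e1 e2 by simp
  next
    case 2
    hence eq: "(x2 + z2) * a = b * (x1 + z1)" by (simp add: algebra_simps)
    hence "b dvd (x2 + z2) * a" by (metis dvd_triv_left)
    hence "b dvd (x2 + z2)" using cop by (simp add: coprime_dvd_mult_left_iff)
    moreover have "0 < x2 + z2" "x2 + z2 < 2 * b" using b1 e1 e2 by linarith+
    ultimately have "x2 + z2 = b" by (rule dvd_between_eq)
    hence "b * a = b * (x1 + z1)" using eq by simp
    moreover have "b > 0" using b1 e1 by linarith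
    ultimately have "x1 + z1 = a" by simp
    thus ?thesis using \<open>x2 + z2 = b\<close> e1 e2 by auto
  qed
qed

lemma dec_exists:
  assumes w: "(a,b) \<in> Omega" and b2: "b \<ge> 2"
  shows "\<exists>X Y. dec (a,b) X Y"
proof -
  have "coprime a b" using w by (simp add: Omega_iff)
  hence "gcd a b = 1" by simp
  then obtain u v where uv: "u * a + v * b = 1" using bezout_int[of a b] by auto
  define x2 where "x2 = u mod b"
  define c where "c = - v - a * (u div b)"
  have u: "u = b * (u div b) + x2" unfolding x2_def by simp
  have key: "a * x2 - 1 = b * c"
  proof -
    have xeq: "x2 = u - b * (u div b)" using u by linarith
    show ?thesis using uv xeq unfolding c_def by algebra
  qed
  have x2r: "0 \<le> x2" "x2 < b" using b2 unfolding x2_def by auto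
  have "x2 \<noteq> 0"
  proof
    assume "x2 = 0"
    hence "b * (- c) = 1" using key by simp
    hence "b dvd 1" by (metis dvd_triv_left)
    thus False using b2 by (simp add: zdvd_imp_le)
  qed
  hence x2p: "1 \<le> x2" using x2r by linarith
  define X where "X = (c, x2)"
  define Y where "Y = (a - c, b - x2)"
  have detXY: "c * (b - x2) - x2 * (a - c) = -1" using key by (simp add: algebra_simps)
  have cX: "coprime c x2"
    by (rule det_coprime[of c "b - x2" x2 "a - c"]) (use detXY in simp)
  have cY: "coprime (a - c) (b - x2)"
    by (rule det_coprime[of "a - c" x2 "b - x2" c]) (use detXY in \<open>simp add: algebra_simps\<close>)
  have "dec (a,b) X Y"
    unfolding dec_def X_def Y_def using cX cY x2p x2r detXY
    by (simp add: Omega_iff adj_def)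
  thus ?thesis by blast
qed

definition par :: "region \<Rightarrow> region \<times> region" where
  "par w = (SOME XY. dec w (fst XY) (snd XY))"

lemma par_dec:
  assumes "w \<in> Omega" "snd w \<ge> 2"
  shows "dec w (fst (par w)) (snd (par w))"
proof -
  obtain a b where w: "w = (a,b)" by fastforce
  from dec_exists[of a b] assms w obtain X Y where "dec w X Y" by auto
  hence "\<exists>XY. dec w (fst XY) (snd XY)" by (intro exI[of _ "(X,Y)"]) simp
  thus ?thesis unfolding par_def by (rule someI_ex)
qed

lemma dec_snd_rsub:
  assumes "dec w X Y" shows "snd (rsub X Y) < snd w" "0 \<le> snd (rsub X Y)"
  using assms by (auto simp: dec_def rsub_def snd_normr)

lemma dec_snd_lt: assumes "dec w X Y" shows "snd X < snd w" "snd Y < snd w"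
  using assms by (auto simp: dec_def)

function uu :: "(region \<Rightarrow> complex) \<Rightarrow> complex \<Rightarrow> (int \<Rightarrow> complex) \<Rightarrow> region \<Rightarrow> complex" where
  "uu g lam ch w = (if w \<in> Omega \<and> snd w \<ge> 2 then
      uu g lam ch (fst (par w)) * uu g lam ch (snd (par w))
        - uu g lam ch (rsub (fst (par w)) (snd (par w))) - g w
    else if snd w = 1 then ch (fst w) else lam)"
  by auto
termination
proof (relation "measure (\<lambda>(g,lam,ch,w). nat (snd w))", goal_cases)
  case 1 show ?case by simp
next
  case (2 g lam ch w)
  hence "dec w (fst (par w)) (snd (par w))" by (intro par_dec) auto
  from dec_snd_lt(1)[OF this] 2 show ?case by simp
next
  case (3 g lam ch w)
  hence "dec w (fst (par w)) (snd (par w))" by (intro par_dec) auto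
  from dec_snd_lt(2)[OF this] 3 show ?case by simp
next
  case (4 g lam ch w)
  hence "dec w (fst (par w)) (snd (par w))" by (intro par_dec) auto
  from dec_snd_rsub[OF this] 4 show ?case by simp
qed

declare uu.simps[simp del]

lemma uu_inf: "uu g lam ch (1,0) = lam"
  by (subst uu.simps) simp

lemma uu_one: "uu g lam ch (k,1) = ch k"
  by (subst uu.simps) simp

lemma uu_rec: "w \<in> Omega \<Longrightarrow> snd w \<ge> 2 \<Longrightarrow> uu g lam ch w =
      uu g lam ch (fst (par w)) * uu g lam ch (snd (par w))
        - uu g lam ch (rsub (fst (par w)) (snd (par w))) - g w"
  by (subst uu.simps) simp


definition rcf :: "real \<Rightarrow> real \<Rightarrow> real \<Rightarrow> nat \<Rightarrow> real" where
  "rcf p q r j = (if j = 1 then p else if j = 2 then q else r)"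

definition GT :: "(region \<Rightarrow> complex) \<Rightarrow> (region \<Rightarrow> complex) \<Rightarrow> complex \<Rightarrow> region \<Rightarrow> region \<Rightarrow> region \<Rightarrow> bool" where
  "GT g f s X Y Z \<longleftrightarrow> (f X)^2 + (f Y)^2 + (f Z)^2 - f X * f Y * f Z + g X * f X + g Y * f Y + g Z * f Z = s"

lemma GT_swap12: "GT g f s X Y Z = GT g f s Y X Z"
  unfolding GT_def by (simp add: algebra_simps)

lemma GT_swap23: "GT g f s X Y Z = GT g f s X Z Y"
  unfolding GT_def by (simp add: algebra_simps)

lemma GT_flip:
  assumes "f Z + f W = f X * f Y - g Z" "g W = g Z"
  shows "GT g f s X Y Z = GT g f s X Y W"
proof -
  have fw: "f W = f X * f Y - g Z - f Z" using assms(1) by (simp add: algebra_simps)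
  have eq: "(f X)^2 + (f Y)^2 + (f Z)^2 - f X * f Y * f Z + g X * f X + g Y * f Y + g Z * f Z
      = (f X)^2 + (f Y)^2 + (f W)^2 - f X * f Y * f W + g X * f X + g Y * f Y + g W * f W"
    unfolding fw assms(2) by (simp add: power2_eq_square algebra_simps)
  show ?thesis unfolding GT_def eq by simp
qed

lemma Omega_pos: "X \<in> Omega \<Longrightarrow> X \<noteq> (1,0) \<Longrightarrow> snd X \<ge> 1"
  by (cases X) (auto simp: Omega_iff)

lemma Omega_snd_nonneg: "X \<in> Omega \<Longrightarrow> snd X \<ge> 0"
  by (cases X) (auto simp: Omega_iff)

lemma adj_inf: "X \<in> Omega \<Longrightarrow> adj (1,0) X \<Longrightarrow> X = (fst X, 1)"
  using Omega_snd_nonneg[of X] by (cases X) (auto simp: adj_def)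

lemma adj_inf': "X \<in> Omega \<Longrightarrow> adj X (1,0) \<Longrightarrow> X = (fst X, 1)"
  using Omega_snd_nonneg[of X] by (cases X) (auto simp: adj_def)

lemma inf_Omega: "(1,0) \<in> Omega" by (simp add: Omega_iff)
lemma one_Omega: "(k,1) \<in> Omega" by (simp add: Omega_iff)

lemma adj_neq: "adj X Y \<Longrightarrow> X \<noteq> Y"
  by (auto simp: adj_def)

lemma rsub_comm: "adj X Y \<Longrightarrow> rsub Y X = rsub X Y"
proof -
  assume a: "adj X Y"
  hence "(fst X - fst Y, snd X - snd Y) \<noteq> (0,0)" using adj_neq[OF a] by (cases X, cases Y) auto
  from normr_neg[OF this] show ?thesis unfolding rsub_def by simp
qed

lemma dec_unique':
  assumes "w \<in> Omega" "dec w X Y" "dec w X' Y'"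
  shows "(X' = X \<and> Y' = Y) \<or> (X' = Y \<and> Y' = X)"
  using dec_unique[of "fst w" "snd w" "fst X" "snd X" "fst Y" "snd Y" "fst X'" "snd X'" "fst Y'" "snd Y'"] assms
  by simp

lemma adj_eq_snd:
  fixes x1 x2 y1 y2 :: int
  assumes "adj (x1,x2) (y1,y2)" "x2 = y2" "x2 \<ge> 1"
  shows "x2 = 1 \<and> (x1 - y1 = 1 \<or> x1 - y1 = -1)"
proof -
  have "\<bar>x2 * (x1 - y1)\<bar> = 1" using assms by (simp add: adj_def algebra_simps)
  hence "x2 * \<bar>x1 - y1\<bar> = 1" using assms(3) by (simp add: abs_mult)
  hence "x2 = 1 \<and> \<bar>x1 - y1\<bar> = 1" using assms(3) pos_zmult_eq_1_iff by auto
  thus ?thesis by linarith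
qed

lemma real_ineq:
  fixes a b c d M C :: real
  assumes "a \<ge> M" "b \<ge> M" "c \<le> max a b" "d \<le> C" "M \<ge> 3 + C" "C \<ge> 0"
  shows "a * b - c - d \<ge> a + b"
proof (cases "a \<ge> b")
  case True
  have "a * (b - 2) \<ge> b * (b - 2)" using True assms by (intro mult_right_mono) auto
  moreover have "b * (b - 3) \<ge> 1 * C" using assms by (intro mult_mono) auto
  ultimately show ?thesis using assms True by (simp add: algebra_simps)
next
  case False
  have "b * (a - 2) \<ge> a * (a - 2)" using False assms by (intro mult_right_mono) auto
  moreover have "a * (a - 3) \<ge> 1 * C" using assms by (intro mult_mono) auto
  ultimately show ?thesis using assms False by (simp add: algebra_simps)
qed

locale mk =
  fixes Cr :: "region \<Rightarrow> nat" and Ce :: "region set \<Rightarrow> nat" and p q r s :: real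
    and lam :: complex and ch :: "int \<Rightarrow> complex" and M m :: real
  assumes vc: "valid_coloring Cr Ce"
    and lam2: "cmod lam \<le> 2"
    and M3: "M \<ge> 3 + \<bar>p\<bar> + \<bar>q\<bar> + \<bar>r\<bar>"
    and mpos: "m > 0"
    and C1: "\<And>k. ch (k+1) + ch (k-1) = lam * ch k - complex_of_real (rcf p q r (Cr (k+1,1)))"
    and C2: "\<And>k. lam^2 + (ch k)^2 + (ch (k+1))^2 - lam * ch k * ch (k+1)
        + complex_of_real (rcf p q r (Cr (1,0))) * lam + complex_of_real (rcf p q r (Cr (k,1))) * ch k
        + complex_of_real (rcf p q r (Cr (k+1,1))) * ch (k+1) = complex_of_real s"
    and C3: "\<And>k. M \<le> cmod (ch k) \<and> m * (real_of_int \<bar>k\<bar> + 1) \<le> cmod (ch k)"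
begin

definition g :: "region \<Rightarrow> complex" where "g w = complex_of_real (rcf p q r (Cr w))"

abbreviation u where "u \<equiv> uu g lam ch"

lemma g_bound: "cmod (g w) \<le> \<bar>p\<bar> + \<bar>q\<bar> + \<bar>r\<bar>"
  by (simp add: g_def rcf_def)

lemma col_edge:
  assumes "X \<in> Omega" "Y \<in> Omega" "adj X Y"
  shows "Cr (radd X Y) = Cr (rsub X Y)"
proof -
  have "edge_rel {X,Y} X Y (radd X Y) (rsub X Y)" using assms by (simp add: edge_rel_def)
  thus ?thesis using vc unfolding valid_coloring_def by metis
qed

lemma edge:
  assumes XO: "X \<in> Omega" and YO: "Y \<in> Omega" and a: "adj X Y"
  shows "u (radd X Y) + u (rsub X Y) = u X * u Y - g (radd X Y)"
proof -
  obtain x1 x2 where X: "X = (x1,x2)" by (cases X)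
  obtain y1 y2 where Y: "Y = (y1,y2)" by (cases Y)
  show ?thesis
  proof (cases "X = (1,0)")
    case True
    hence "y2 = 1" using adj_inf[OF YO] a Y by auto
    hence "radd X Y = (y1+1,1)" "rsub X Y = (y1-1,1)" using True Y
      by (auto simp: radd_def rsub_def normr_def)
    thus ?thesis using C1[of y1] True Y \<open>y2 = 1\<close> by (simp add: uu_inf uu_one g_def add.commute)
  next
    case XF: False
    show ?thesis
    proof (cases "Y = (1,0)")
      case True
      hence "x2 = 1" using adj_inf'[OF XO] a X by auto
      hence "radd X Y = (x1+1,1)" "rsub X Y = (x1-1,1)" using True X
        by (auto simp: radd_def rsub_def normr_def)
      thus ?thesis using C1[of x1] True X \<open>x2 = 1\<close> by (simp add: uu_inf uu_one g_def add.commute mult.commute)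
    next
      case YF: False
      have x2: "x2 \<ge> 1" using Omega_pos[OF XO XF] X by simp
      have y2: "y2 \<ge> 1" using Omega_pos[OF YO YF] Y by simp
      define w where "w = (x1 + y1, x2 + y2)"
      have rw: "radd X Y = w" using X Y x2 y2 by (simp add: radd_def normr_def w_def)
      have det: "\<bar>x1 * y2 - x2 * y1\<bar> = 1" using a X Y by (simp add: adj_def)
      have "\<bar>(x1 + y1) * y2 - (x2 + y2) * y1\<bar> = 1" using det by (simp add: algebra_simps)
      hence "coprime (x1 + y1) (x2 + y2)" by (rule det_coprime)
      hence wO: "w \<in> Omega" using x2 y2 by (simp add: w_def Omega_iff)
      have dXY: "dec w X Y" using XO YO x2 y2 a X Y by (simp add: dec_def w_def)
      have w2: "snd w \<ge> 2" using x2 y2 by (simp add: w_def)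
      have dp: "dec w (fst (par w)) (snd (par w))" by (rule par_dec[OF wO w2])
      have "u w = u (fst (par w)) * u (snd (par w)) - u (rsub (fst (par w)) (snd (par w))) - g w"
        by (rule uu_rec[OF wO w2])
      also have "\<dots> = u X * u Y - u (rsub X Y) - g w"
        using dec_unique'[OF wO dXY dp] rsub_comm[OF a] by (auto simp: mult.commute)
      finally show ?thesis using rw by simp
    qed
  qed
qed

lemma chainGT: "GT g u (complex_of_real s) (1,0) (k,1) (k+1,1)"
  unfolding GT_def uu_inf uu_one g_def using C2[of k] by simp

lemma vert_aux:
  "X \<in> Omega \<Longrightarrow> Y \<in> Omega \<Longrightarrow> adj X Y \<Longrightarrow> GT g u (complex_of_real s) X Y (radd X Y)"
proof (induction "nat (snd X + snd Y)" arbitrary: X Y rule: less_induct)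
  case less
  note XO = less.prems(1) and YO = less.prems(2) and a = less.prems(3)
  obtain x1 x2 where X: "X = (x1,x2)" by (cases X)
  obtain y1 y2 where Y: "Y = (y1,y2)" by (cases Y)
  show ?case
  proof (cases "X = (1,0)")
    case True
    hence "y2 = 1" using adj_inf[OF YO] a Y by auto
    hence "radd X Y = (y1+1,1)" using True Y by (auto simp: radd_def normr_def)
    thus ?thesis using chainGT[of y1] True Y \<open>y2 = 1\<close> by simp
  next
    case XF: False
    show ?thesis
    proof (cases "Y = (1,0)")
      case True
      hence "x2 = 1" using adj_inf'[OF XO] a X by auto
      hence "radd X Y = (x1+1,1)" using True X by (auto simp: radd_def normr_def)
      thus ?thesis using chainGT[of x1] True X \<open>x2 = 1\<close> GT_swap12 by simp
    next
      case YF: False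
      have x2: "x2 \<ge> 1" using Omega_pos[OF XO XF] X by simp
      have y2: "y2 \<ge> 1" using Omega_pos[OF YO YF] Y by simp
      have det: "\<bar>x1 * y2 - x2 * y1\<bar> = 1" using a X Y by (simp add: adj_def)
      have GW: "GT g u (complex_of_real s) X Y (rsub X Y)"
      proof -
        consider "x2 = y2" | "x2 > y2" | "x2 < y2" by linarith
        thus ?thesis
        proof cases
          case 1
          from adj_eq_snd[of x1 x2 y1 y2] a X Y 1 x2
          have e: "x2 = 1" "x1 - y1 = 1 \<or> x1 - y1 = -1" by auto
          show ?thesis
          proof (cases "x1 - y1 = 1")
            case True
            hence "rsub X Y = (1,0)" "X = (y1+1,1)" "Y = (y1,1)" using X Y 1 e
              by (auto simp: rsub_def normr_def)
            thus ?thesis using chainGT[of y1] GT_swap12 GT_swap23 by metis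
          next
            case False
            hence "x1 - y1 = -1" using e by simp
            hence "rsub X Y = (1,0)" "X = (x1,1)" "Y = (x1+1,1)" using X Y 1 e
              by (auto simp: rsub_def normr_def)
            thus ?thesis using chainGT[of x1] GT_swap12 GT_swap23 by metis
          qed
        next
          case 2
          define W where "W = (x1 - y1, x2 - y2)"
          have rs: "rsub X Y = W" using X Y 2 by (simp add: rsub_def normr_def W_def)
          have "\<bar>(x1 - y1) * y2 - (x2 - y2) * y1\<bar> = 1" using det by (simp add: algebra_simps)
          hence "coprime (x1 - y1) (x2 - y2)" by (rule det_coprime)
          hence WO: "W \<in> Omega" using 2 by (simp add: W_def Omega_iff)
          have aYW: "adj Y W" using det Y by (simp add: adj_def W_def algebra_simps)
          have ra: "radd Y W = X" using X Y 2 x2 by (simp add: radd_def normr_def W_def)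
          have "nat (snd Y + snd W) < nat (snd X + snd Y)" using X Y 2 y2 by (simp add: W_def)
          from less.hyps[OF this YO WO aYW] ra rs show ?thesis using GT_swap12 GT_swap23 by metis
        next
          case 3
          define W where "W = (y1 - x1, y2 - x2)"
          have rs: "rsub X Y = W" using X Y 3 by (simp add: rsub_def normr_def W_def)
          have "\<bar>(y1 - x1) * x2 - (y2 - x2) * x1\<bar> = 1" using det by (simp add: algebra_simps abs_minus_commute)
          hence "coprime (y1 - x1) (y2 - x2)" by (rule det_coprime)
          hence WO: "W \<in> Omega" using 3 by (simp add: W_def Omega_iff)
          have aXW: "adj X W" using det X by (simp add: adj_def W_def algebra_simps)
          have ra: "radd X W = Y" using X Y 3 y2 by (simp add: radd_def normr_def W_def)
          have "nat (snd X + snd W) < nat (snd X + snd Y)" using X Y 3 x2 by (simp add: W_def)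
          from less.hyps[OF this XO WO aXW] ra rs show ?thesis using GT_swap12 GT_swap23 by metis
        qed
      qed
      have "GT g u (complex_of_real s) X Y (radd X Y) = GT g u (complex_of_real s) X Y (rsub X Y)"
        by (rule GT_flip) (use edge[OF XO YO a] col_edge[OF XO YO a] in \<open>auto simp: g_def\<close>)
      thus ?thesis using GW by simp
    qed
  qed
qed

lemma vert_add: "X \<in> Omega \<Longrightarrow> Y \<in> Omega \<Longrightarrow> adj X Y \<Longrightarrow> GT g u (complex_of_real s) X Y (radd X Y)"
  by (rule vert_aux)

lemma vert_sub: assumes "X \<in> Omega" "Y \<in> Omega" "adj X Y"
  shows "GT g u (complex_of_real s) X Y (rsub X Y)"
proof -
  have "GT g u (complex_of_real s) X Y (radd X Y) = GT g u (complex_of_real s) X Y (rsub X Y)"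
    by (rule GT_flip) (use edge[OF assms] col_edge[OF assms] in \<open>auto simp: g_def\<close>)
  thus ?thesis using vert_add[OF assms] by simp
qed

end

lemma cmod_3: "cmod (A - B - C) \<ge> cmod A - cmod B - cmod C"
proof -
  have "cmod A - cmod (B + C) \<le> cmod (A - (B + C))" by (rule norm_triangle_ineq2)
  moreover have "cmod (B + C) \<le> cmod B + cmod C" by (rule norm_triangle_ineq)
  ultimately show ?thesis by (simp add: diff_diff_eq)
qed

lemma vert_conv:
  fixes x y z P Q R S :: complex
  assumes "x^2 + y^2 + z^2 - x * y * z + P * x + Q * y + R * z = S"
  shows "(- x)^2 + (- y)^2 + (- z)^2 + - x * - y * - z = P * - x + Q * - y + R * - z + S"
proof -
  from assms have S: "S = x^2 + y^2 + z^2 - x * y * z + P * x + Q * y + R * z" by simp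
  show ?thesis unfolding S by (simp add: algebra_simps)
qed

lemma edge_conv:
  fixes a b x y c d :: complex
  assumes "a + b = x * y - d" "d = c"
  shows "- a + - b = c - - x * - y"
proof -
  have "- a + - b = - (a + b)" by simp
  thus ?thesis using assms by simp
qed

context mk begin

lemma M_ge: "M \<ge> 3" using M3 by linarith

lemma grow:
  "w \<in> Omega \<Longrightarrow> snd w \<ge> 1 \<Longrightarrow> M \<le> cmod (u w) \<and> m * real_of_int (\<bar>fst w\<bar> + \<bar>snd w\<bar>) \<le> cmod (u w)
     \<and> (\<forall>X Y. dec w X Y \<longrightarrow> cmod (u X) + cmod (u Y) \<le> cmod (u w))"
proof (induction "nat (snd w)" arbitrary: w rule: less_induct)
  case less
  obtain a b where w: "w = (a,b)" by (cases w)
  show ?case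
  proof (cases "b = 1")
    case True
    have "\<not> dec w X Y" for X Y using True w by (auto simp: dec_def)
    thus ?thesis using C3[of a] True w by (simp add: uu_one)
  next
    case False
    hence b2: "b \<ge> 2" using less.prems w by simp
    have wO: "w \<in> Omega" using less.prems by simp
    have IH: "M \<le> cmod (u v) \<and> m * real_of_int (\<bar>fst v\<bar> + \<bar>snd v\<bar>) \<le> cmod (u v)
       \<and> (\<forall>X Y. dec v X Y \<longrightarrow> cmod (u X) + cmod (u Y) \<le> cmod (u v))"
      if "v \<in> Omega" "snd v \<ge> 1" "snd v < b" for v
      using less.hyps[of v] that w by simp
    have struct: "cmod (u X) + cmod (u Y) \<le> cmod (u w)" if d: "dec w X Y" for X Y
    proof -
      obtain x1 x2 where X: "X = (x1,x2)" by (cases X)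
      obtain y1 y2 where Y: "Y = (y1,y2)" by (cases Y)
      from d have XO: "X \<in> Omega" and YO: "Y \<in> Omega" and x2: "x2 \<ge> 1" and y2: "y2 \<ge> 1"
        and a: "adj X Y" and sa: "x1 + y1 = a" and sb: "x2 + y2 = b"
        using X Y w by (auto simp: dec_def)
      have IHX: "M \<le> cmod (u X)" "\<forall>P Q. dec X P Q \<longrightarrow> cmod (u P) + cmod (u Q) \<le> cmod (u X)"
        using IH[OF XO] X x2 y2 sb by auto
      have IHY: "M \<le> cmod (u Y)" "\<forall>P Q. dec Y P Q \<longrightarrow> cmod (u P) + cmod (u Q) \<le> cmod (u Y)"
        using IH[OF YO] Y x2 y2 sb by auto
      have rw: "radd X Y = w" using X Y x2 y2 sa sb w by (simp add: radd_def normr_def)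
      have uw: "u w = u X * u Y - u (rsub X Y) - g w" using edge[OF XO YO a] rw
        by (simp add: algebra_simps)
      have det: "\<bar>x1 * y2 - x2 * y1\<bar> = 1" using a X Y by (simp add: adj_def)
      have cW: "cmod (u (rsub X Y)) \<le> max (cmod (u X)) (cmod (u Y))"
      proof -
        consider "x2 = y2" | "x2 > y2" | "x2 < y2" by linarith
        thus ?thesis
        proof cases
          case 1
          from adj_eq_snd[of x1 x2 y1 y2] a X Y 1 x2
          have e: "x2 = 1" "x1 - y1 = 1 \<or> x1 - y1 = -1" by auto
          hence "rsub X Y = (1,0)" using X Y 1 by (auto simp: rsub_def normr_def)
          hence "cmod (u (rsub X Y)) \<le> 2" using lam2 by (simp add: uu_inf)
          thus ?thesis using IHX M_ge by linarith
        next
          case 2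
          define W where "W = (x1 - y1, x2 - y2)"
          have rs: "rsub X Y = W" using X Y 2 by (simp add: rsub_def normr_def W_def)
          have "\<bar>(x1 - y1) * y2 - (x2 - y2) * y1\<bar> = 1" using det by (simp add: algebra_simps)
          hence "coprime (x1 - y1) (x2 - y2)" by (rule det_coprime)
          hence WO: "W \<in> Omega" using 2 by (simp add: W_def Omega_iff)
          have aYW: "adj Y W" using det Y by (simp add: adj_def W_def algebra_simps)
          have "dec X Y W" using YO WO aYW 2 y2 X Y by (simp add: dec_def W_def)
          hence "cmod (u Y) + cmod (u W) \<le> cmod (u X)" using IHX(2) by blast
          hence "cmod (u W) \<le> cmod (u X)" using norm_ge_zero[of "u Y"] by linarith
          thus ?thesis using rs by simp
        next
          case 3
          define W where "W = (y1 - x1, y2 - x2)"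
          have rs: "rsub X Y = W" using X Y 3 by (simp add: rsub_def normr_def W_def)
          have "\<bar>(y1 - x1) * x2 - (y2 - x2) * x1\<bar> = 1" using det by (simp add: algebra_simps abs_minus_commute)
          hence "coprime (y1 - x1) (y2 - x2)" by (rule det_coprime)
          hence WO: "W \<in> Omega" using 3 by (simp add: W_def Omega_iff)
          have aXW: "adj X W" using det X by (simp add: adj_def W_def algebra_simps)
          have "dec Y X W" using XO WO aXW 3 x2 X Y by (simp add: dec_def W_def)
          hence "cmod (u X) + cmod (u W) \<le> cmod (u Y)" using IHY(2) by blast
          hence "cmod (u W) \<le> cmod (u Y)" using norm_ge_zero[of "u X"] by linarith
          thus ?thesis using rs by simp
        qed
      qed
      have "cmod (u w) \<ge> cmod (u X * u Y) - cmod (u (rsub X Y)) - cmod (g w)"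
        unfolding uw by (rule cmod_3)
      moreover have "cmod (u X) * cmod (u Y) - cmod (u (rsub X Y)) - cmod (g w) \<ge> cmod (u X) + cmod (u Y)"
        by (rule real_ineq[OF IHX(1) IHY(1) cW g_bound]) (use M3 in auto)
      ultimately show ?thesis by (simp add: norm_mult)
    qed
    obtain X Y where d: "dec w X Y" using dec_exists[of a b] wO b2 w by auto
    obtain x1 x2 where X: "X = (x1,x2)" by (cases X)
    obtain y1 y2 where Y: "Y = (y1,y2)" by (cases Y)
    from d have XO: "X \<in> Omega" and YO: "Y \<in> Omega" and x2: "x2 \<ge> 1" and y2: "y2 \<ge> 1"
      and sa: "x1 + y1 = a" and sb: "x2 + y2 = b"
      using X Y w by (auto simp: dec_def)
    have hX: "M \<le> cmod (u X)" "m * real_of_int (\<bar>x1\<bar> + \<bar>x2\<bar>) \<le> cmod (u X)"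
      using IH[OF XO] X x2 y2 sb by auto
    have hY: "M \<le> cmod (u Y)" "m * real_of_int (\<bar>y1\<bar> + \<bar>y2\<bar>) \<le> cmod (u Y)"
      using IH[OF YO] Y x2 y2 sb by auto
    have s: "cmod (u X) + cmod (u Y) \<le> cmod (u w)" by (rule struct[OF d])
    have "\<bar>a\<bar> + \<bar>b\<bar> \<le> (\<bar>x1\<bar> + \<bar>x2\<bar>) + (\<bar>y1\<bar> + \<bar>y2\<bar>)" using sa sb x2 y2 by linarith
    hence "real_of_int (\<bar>a\<bar> + \<bar>b\<bar>) \<le> real_of_int (\<bar>x1\<bar> + \<bar>x2\<bar>) + real_of_int (\<bar>y1\<bar> + \<bar>y2\<bar>)"
      by linarith
    hence "m * real_of_int (\<bar>a\<bar> + \<bar>b\<bar>) \<le> m * real_of_int (\<bar>x1\<bar> + \<bar>x2\<bar>) + m * real_of_int (\<bar>y1\<bar> + \<bar>y2\<bar>)"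
      using mpos by (simp add: distrib_left[symmetric])
    hence hb: "m * real_of_int (\<bar>a\<bar> + \<bar>b\<bar>) \<le> cmod (u w)" using hX hY s by linarith
    have "M \<le> cmod (u w)" using hX hY s M_ge by linarith
    thus ?thesis using hb struct w by auto
  qed
qed

lemma main:
  "\<exists>\<phi>. markoff_map Cr Ce (complex_of_real p) (complex_of_real q) (complex_of_real r)
               (complex_of_real s) \<phi> \<and> finite {X \<in> Omega. cmod (\<phi> X) \<le> B}"
proof (intro exI conjI)
  define \<phi> where "\<phi> = (\<lambda>w. - u w)"
  show "markoff_map Cr Ce (complex_of_real p) (complex_of_real q) (complex_of_real r)
               (complex_of_real s) (\<lambda>w. - u w)"
    unfolding markoff_map_def
  proof (intro conjI allI impI)
    fix X Y Z assume H: "at_vertex X Y Z \<and> Cr X = 1 \<and> Cr Y = 2 \<and> Cr Z = 3"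
    then obtain e W where "edge_rel e X Y Z W \<or> edge_rel e X Y W Z" by (auto simp: at_vertex_def)
    hence XO: "X \<in> Omega" and YO: "Y \<in> Omega" and a: "adj X Y" and Z: "Z = radd X Y \<or> Z = rsub X Y"
      by (auto simp: edge_rel_def)
    have "GT g u (complex_of_real s) X Y Z" using Z vert_add[OF XO YO a] vert_sub[OF XO YO a] by auto
    hence h: "(u X)^2 + (u Y)^2 + (u Z)^2 - u X * u Y * u Z + complex_of_real p * u X
        + complex_of_real q * u Y + complex_of_real r * u Z = complex_of_real s"
      using H by (simp add: GT_def g_def rcf_def)
    show "(- u X)\<^sup>2 + (- u Y)\<^sup>2 + (- u Z)\<^sup>2 + - u X * - u Y * - u Z =
       complex_of_real p * - u X + complex_of_real q * - u Y + complex_of_real r * - u Z + complex_of_real s"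
      using h by (rule vert_conv)
  next
    fix e X Y Z W
    assume H: "edge_rel e X Y Z W \<and> Ce e = 1"
    hence XO: "X \<in> Omega" and YO: "Y \<in> Omega" and a: "adj X Y" and Z: "Z = radd X Y" and W: "W = rsub X Y"
      by (auto simp: edge_rel_def)
    have "Ce e = Cr Z" using H vc unfolding valid_coloring_def by blast
    hence "g Z = complex_of_real p" using H by (simp add: g_def rcf_def)
    thus "- u Z + - u W = complex_of_real p - - u X * - u Y" using edge[OF XO YO a] Z W by (intro edge_conv) auto
  next
    fix e X Y Z W
    assume H: "edge_rel e X Y Z W \<and> Ce e = 2"
    hence XO: "X \<in> Omega" and YO: "Y \<in> Omega" and a: "adj X Y" and Z: "Z = radd X Y" and W: "W = rsub X Y"
      by (auto simp: edge_rel_def)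
    have "Ce e = Cr Z" using H vc unfolding valid_coloring_def by blast
    hence "g Z = complex_of_real q" using H by (simp add: g_def rcf_def)
    thus "- u Z + - u W = complex_of_real q - - u X * - u Y" using edge[OF XO YO a] Z W by (intro edge_conv) auto
  next
    fix e X Y Z W
    assume H: "edge_rel e X Y Z W \<and> Ce e = 3"
    hence XO: "X \<in> Omega" and YO: "Y \<in> Omega" and a: "adj X Y" and Z: "Z = radd X Y" and W: "W = rsub X Y"
      by (auto simp: edge_rel_def)
    have "Ce e = Cr Z" using H vc unfolding valid_coloring_def by blast
    hence "g Z = complex_of_real r" using H by (simp add: g_def rcf_def)
    thus "- u Z + - u W = complex_of_real r - - u X * - u Y" using edge[OF XO YO a] Z W by (intro edge_conv) auto
  qed
  define N where "N = \<lceil>B / m\<rceil>"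
  have sub: "{X \<in> Omega. cmod (- u X) \<le> B} \<subseteq> insert (1,0) ({-N..N} \<times> {-N..N})"
  proof
    fix X assume "X \<in> {X \<in> Omega. cmod (- u X) \<le> B}"
    hence XO: "X \<in> Omega" and XB: "cmod (u X) \<le> B" by auto
    show "X \<in> insert (1,0) ({-N..N} \<times> {-N..N})"
    proof (cases "X = (1,0)")
      case False
      hence "snd X \<ge> 1" using Omega_pos[OF XO] by simp
      hence "m * real_of_int (\<bar>fst X\<bar> + \<bar>snd X\<bar>) \<le> B" using grow[OF XO] XB by force
      hence "real_of_int (\<bar>fst X\<bar> + \<bar>snd X\<bar>) \<le> B / m" using mpos by (simp add: field_simps)
      also have "\<dots> \<le> real_of_int N" unfolding N_def by simp
      finally have "\<bar>fst X\<bar> + \<bar>snd X\<bar> \<le> N" by linarith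
      hence "fst X \<in> {-N..N}" "snd X \<in> {-N..N}" by auto
      thus ?thesis by (cases X) auto
    qed simp
  qed
  show "finite {X \<in> Omega. cmod (- u X) \<le> B}"
    by (rule finite_subset[OF sub]) auto
qed

end

definition Dk :: "real \<Rightarrow> real \<Rightarrow> int \<Rightarrow> complex" where
  "Dk ev od k = complex_of_real (if even k then ev else od)"
definition eps :: "int \<Rightarrow> complex" where "eps k = (if even k then 1 else -1)"
definition zz :: "real \<Rightarrow> int \<Rightarrow> complex" where "zz T k = of_int k - \<i> * complex_of_real T"

definition CH :: "real \<Rightarrow> real \<Rightarrow> real \<Rightarrow> real \<Rightarrow> real \<Rightarrow> complex \<Rightarrow> (int \<Rightarrow> complex) \<Rightarrow> real \<Rightarrow> bool" where
  "CH ev od io s M lam ch m \<longleftrightarrow> cmod lam \<le> 2 \<and> m > 0 \<and>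
     (\<forall>k. ch (k+1) + ch (k-1) = lam * ch k - Dk ev od (k+1)) \<and>
     (\<forall>k. lam^2 + (ch k)^2 + (ch (k+1))^2 - lam * ch k * ch (k+1) + complex_of_real io * lam
          + Dk ev od k * ch k + Dk ev od (k+1) * ch (k+1) = complex_of_real s) \<and>
     (\<forall>k. M \<le> cmod (ch k) \<and> m * (real_of_int \<bar>k\<bar> + 1) \<le> cmod (ch k))"

lemma eps_suc: "eps (k+1) = - eps k" "eps (k-1) = - eps k"
  by (auto simp: eps_def)
lemma eps_sq: "(eps k)^2 = 1" by (simp add: eps_def)
lemma eps_norm: "cmod (eps k) = 1" by (simp add: eps_def)

lemma zz_suc: "zz T (k+1) = zz T k + 1" "zz T (k-1) = zz T k - 1"
  by (simp_all add: zz_def)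

lemma zz_norm: "(cmod (zz T k))^2 = (real_of_int k)^2 + T^2"
  by (simp add: zz_def cmod_power2)

lemma zz_ge: "cmod (zz T k) \<ge> \<bar>real_of_int k\<bar>" "cmod (zz T k) \<ge> \<bar>T\<bar>"
proof -
  show "cmod (zz T k) \<ge> \<bar>real_of_int k\<bar>" using abs_Re_le_cmod[of "zz T k"] by (simp add: zz_def)
  show "cmod (zz T k) \<ge> \<bar>T\<bar>" using abs_Im_le_cmod[of "zz T k"] by (simp add: zz_def)
qed

lemma cmod_3': "cmod (P + E - F) \<ge> cmod P - cmod E - cmod F"
  using cmod_3[of P "- E" F] by simp

lemma int_abs_le_sq: "\<bar>real_of_int k\<bar> \<le> (real_of_int k)^2"
proof -
  have "\<bar>k\<bar> \<le> k^2"
  proof (cases "k = 0")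
    case False
    hence "1 \<le> \<bar>k\<bar>" by linarith
    hence "\<bar>k\<bar> * 1 \<le> \<bar>k\<bar> * \<bar>k\<bar>" by (intro mult_left_mono) auto
    thus ?thesis by (simp add: power2_eq_square abs_mult[symmetric])
  qed simp
  hence "real_of_int \<bar>k\<bar> \<le> real_of_int (k^2)" by linarith
  thus ?thesis by simp
qed

lemma alg1_c1:
  fixes A E Bq z ep :: complex
  shows "(- A * (z+1)^2 + E - Bq * (- ep)) + (- A * (z - 1)^2 + E - Bq * (- ep))
       = 2 * (- A * z^2 + E - Bq * ep) - (2*A + 4*Bq*(- ep))"
  by algebra

lemma alg1_c2:
  fixes A E Bq z ep s io :: complex
  assumes "ep^2 = 1" "4*A*E = s - 4 - 2*io + A^2 + 4*Bq^2"
  shows "2^2 + (- A * z^2 + E - Bq * ep)^2 + (- A * (z+1)^2 + E - Bq * (- ep))^2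
     - 2 * (- A * z^2 + E - Bq * ep) * (- A * (z+1)^2 + E - Bq * (- ep)) + io * 2
     + (2*A + 4*Bq*ep) * (- A * z^2 + E - Bq * ep)
     + (2*A + 4*Bq*(- ep)) * (- A * (z+1)^2 + E - Bq * (- ep)) = s"
  using assms by algebra

lemma alg2_c1:
  fixes A E z ep :: complex
  shows "(- ep) * (- A * (z+1)^2 + E) + (- ep) * (- A * (z - 1)^2 + E)
       = (- 2) * (ep * (- A * z^2 + E)) - 2 * A * (- ep)"
  by algebra

lemma alg2_c2:
  fixes A E z ep s io :: complex
  assumes "ep^2 = 1" "4*A*E = s - 4 + 2*io + A^2"
  shows "(- 2)^2 + (ep * (- A * z^2 + E))^2 + ((- ep) * (- A * (z+1)^2 + E))^2
     - (- 2) * (ep * (- A * z^2 + E)) * ((- ep) * (- A * (z+1)^2 + E)) + io * (- 2)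
     + (2 * A * ep) * (ep * (- A * z^2 + E))
     + (2 * A * (- ep)) * ((- ep) * (- A * (z+1)^2 + E)) = s"
  using assms by algebra

lemma alg3_c2:
  fixes B z s io :: complex
  assumes "B^2 = s - 4 - 2*io"
  shows "2^2 + (B * z)^2 + (B * (z+1))^2 - 2 * (B * z) * (B * (z+1)) + io * 2 + 0 * (B * z) + 0 * (B * (z+1)) = s"
  using assms by algebra

lemma alg4_c2:
  fixes B z s io ep :: complex
  assumes "B^2 = s - 4 + 2*io" "ep^2 = 1"
  shows "(-2)^2 + (ep * B * z)^2 + ((- ep) * B * (z+1))^2 - (- 2) * (ep * B * z) * ((- ep) * B * (z+1))
     + io * (- 2) + 0 * (ep * B * z) + 0 * ((- ep) * B * (z+1)) = s"
  using assms by algebra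

lemma chain1:
  assumes evod: "ev + od \<noteq> 0" and M: "M \<ge> 3"
  shows "\<exists>lam ch m. CH ev od io s M lam ch m"
proof -
  define a where "a = (ev + od) / 4"
  define b where "b = (ev - od) / 8"
  have a0: "a \<noteq> 0" using evod by (simp add: a_def)
  define e where "e = (s - 4 - 2 * io + a^2 + 4 * b^2) / (4 * a)"
  define T where "T = sqrt ((\<bar>e\<bar> + \<bar>b\<bar> + M) / \<bar>a\<bar>)"
  define A where "A = complex_of_real a"
  define Bq where "Bq = complex_of_real b"
  define E where "E = complex_of_real e"
  define ch where "ch k = - A * (zz T k)^2 + E - Bq * eps k" for k
  define m where "m = min \<bar>a\<bar> 1"
  have D: "Dk ev od k = 2 * A + 4 * Bq * eps k" for k
  proof -
    have "2 * A + 4 * Bq * eps k = complex_of_real (if even k then 2 * a + 4 * b else 2 * a - 4 * b)"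
      by (simp add: A_def Bq_def eps_def)
    also have "\<dots> = Dk ev od k" by (cases "even k") (simp_all add: Dk_def a_def b_def field_simps)
    finally show ?thesis by simp
  qed
  have "4 * a * e = s - 4 - 2 * io + a^2 + 4 * b^2" using a0 by (simp add: e_def)
  hence Eq: "4 * A * E = complex_of_real s - 4 - 2 * complex_of_real io + A^2 + 4 * Bq^2"
    unfolding A_def E_def Bq_def by (metis (mono_tags, lifting) of_real_add of_real_diff of_real_mult
        of_real_numeral of_real_power)
  have C1: "ch (k+1) + ch (k-1) = 2 * ch k - Dk ev od (k+1)" for k
    unfolding ch_def zz_suc eps_suc D[of "k+1"] by (rule alg1_c1)
  have C2: "2^2 + (ch k)^2 + (ch (k+1))^2 - 2 * ch k * ch (k+1) + complex_of_real io * 2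
          + Dk ev od k * ch k + Dk ev od (k+1) * ch (k+1) = complex_of_real s" for k
    unfolding ch_def zz_suc eps_suc D[of "k+1"] D[of k] by (rule alg1_c2[OF eps_sq Eq])
  have T2: "\<bar>a\<bar> * T^2 = \<bar>e\<bar> + \<bar>b\<bar> + M" using a0 M unfolding T_def by simp
  have C3: "M \<le> cmod (ch k) \<and> m * (real_of_int \<bar>k\<bar> + 1) \<le> cmod (ch k)" for k
  proof -
    have "cmod (ch k) \<ge> cmod (- A * (zz T k)^2) - cmod E - cmod (Bq * eps k)"
      unfolding ch_def by (rule cmod_3')
    moreover have "cmod (- A * (zz T k)^2) = \<bar>a\<bar> * ((real_of_int k)^2 + T^2)"
      by (simp add: A_def norm_mult norm_power zz_norm[symmetric])
    moreover have "cmod E = \<bar>e\<bar>" "cmod (Bq * eps k) = \<bar>b\<bar>" by (simp_all add: E_def Bq_def norm_mult eps_norm)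
    ultimately have h: "cmod (ch k) \<ge> \<bar>a\<bar> * (real_of_int k)^2 + M"
      using T2 by (simp add: algebra_simps)
    have "\<bar>a\<bar> * (real_of_int k)^2 \<ge> 0" by simp
    hence c1: "M \<le> cmod (ch k)" using h by linarith
    have "m * \<bar>real_of_int k\<bar> \<le> \<bar>a\<bar> * (real_of_int k)^2"
      using int_abs_le_sq[of k] unfolding m_def
      by (intro mult_mono) auto
    moreover have "m \<le> M" using M unfolding m_def by linarith
    ultimately have "m * (real_of_int \<bar>k\<bar> + 1) \<le> cmod (ch k)" using h by (simp add: algebra_simps)
    thus ?thesis using c1 by simp
  qed
  have "m > 0" using a0 unfolding m_def by simp
  hence "CH ev od io s M 2 ch m" unfolding CH_def using C1 C2 C3 by simp
  thus ?thesis by blast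
qed

lemma chain2:
  assumes evod: "ev + od = 0" "ev \<noteq> 0" and M: "M \<ge> 3"
  shows "\<exists>lam ch m. CH ev od io s M lam ch m"
proof -
  define a where "a = ev / 2"
  have a0: "a \<noteq> 0" using evod by (simp add: a_def)
  define e where "e = (s - 4 + 2 * io + a^2) / (4 * a)"
  define T where "T = sqrt ((\<bar>e\<bar> + M) / \<bar>a\<bar>)"
  define A where "A = complex_of_real a"
  define E where "E = complex_of_real e"
  define ch where "ch k = eps k * (- A * (zz T k)^2 + E)" for k
  define m where "m = min \<bar>a\<bar> 1"
  have D: "Dk ev od k = 2 * A * eps k" for k
  proof -
    have "2 * A * eps k = complex_of_real (if even k then 2 * a else - 2 * a)"
      by (simp add: A_def eps_def)
    also have "\<dots> = Dk ev od k" using evod by (simp add: Dk_def a_def)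
    finally show ?thesis by simp
  qed
  have "4 * a * e = s - 4 + 2 * io + a^2" using a0 by (simp add: e_def)
  hence Eq: "4 * A * E = complex_of_real s - 4 + 2 * complex_of_real io + A^2"
    unfolding A_def E_def by (metis (mono_tags, lifting) of_real_add of_real_diff of_real_mult
        of_real_numeral of_real_power)
  have C1: "ch (k+1) + ch (k-1) = (-2) * ch k - Dk ev od (k+1)" for k
    unfolding ch_def zz_suc eps_suc D[of "k+1"] by (rule alg2_c1)
  have C2: "(-2)^2 + (ch k)^2 + (ch (k+1))^2 - (-2) * ch k * ch (k+1) + complex_of_real io * (-2)
          + Dk ev od k * ch k + Dk ev od (k+1) * ch (k+1) = complex_of_real s" for k
    unfolding ch_def zz_suc eps_suc D[of "k+1"] D[of k] by (rule alg2_c2[OF eps_sq Eq])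
  have T2: "\<bar>a\<bar> * T^2 = \<bar>e\<bar> + M" using a0 M unfolding T_def by simp
  have C3: "M \<le> cmod (ch k) \<and> m * (real_of_int \<bar>k\<bar> + 1) \<le> cmod (ch k)" for k
  proof -
    have "cmod (- A * (zz T k)^2 + E - 0) \<ge> cmod (- A * (zz T k)^2) - cmod E - cmod (0::complex)"
      by (rule cmod_3')
    moreover have "cmod (ch k) = cmod (- A * (zz T k)^2 + E)" by (simp add: ch_def norm_mult eps_norm)
    moreover have "cmod (- A * (zz T k)^2) = \<bar>a\<bar> * ((real_of_int k)^2 + T^2)"
      by (simp add: A_def norm_mult norm_power zz_norm[symmetric])
    moreover have "cmod E = \<bar>e\<bar>" by (simp_all add: E_def)
    ultimately have h: "cmod (ch k) \<ge> \<bar>a\<bar> * (real_of_int k)^2 + M"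
      using T2 by (simp add: algebra_simps)
    have "\<bar>a\<bar> * (real_of_int k)^2 \<ge> 0" by simp
    hence c1: "M \<le> cmod (ch k)" using h by linarith
    have "m * \<bar>real_of_int k\<bar> \<le> \<bar>a\<bar> * (real_of_int k)^2"
      using int_abs_le_sq[of k] unfolding m_def
      by (intro mult_mono) auto
    moreover have "m \<le> M" using M unfolding m_def by linarith
    ultimately have "m * (real_of_int \<bar>k\<bar> + 1) \<le> cmod (ch k)" using h by (simp add: algebra_simps)
    thus ?thesis using c1 by simp
  qed
  have "m > 0" using a0 unfolding m_def by simp
  hence "CH ev od io s M (-2) ch m" unfolding CH_def using C1 C2 C3 by simp
  thus ?thesis by blast
qed

lemma growth_lin:
  fixes B c :: complex and M T m :: real and k :: int
  assumes B0: "B \<noteq> 0" and M: "M \<ge> 3" and T: "T = M / cmod B" and nc: "cmod c = cmod B * cmod (zz T k)"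
    and m: "m = min (cmod B) 1 / 2"
  shows "M \<le> cmod c \<and> m * (real_of_int \<bar>k\<bar> + 1) \<le> cmod c"
proof -
  have Bp: "cmod B > 0" using B0 by simp
  have "cmod B * \<bar>T\<bar> = M" using Bp M T by simp
  hence h1: "M \<le> cmod c" unfolding nc using zz_ge(2)[of T k] Bp by (metis mult_left_mono less_imp_le)
  have h2: "cmod B * \<bar>real_of_int k\<bar> \<le> cmod c" unfolding nc using zz_ge(1)[where T=T and k=k] Bp
    by (intro mult_left_mono) auto
  have "m * \<bar>real_of_int k\<bar> \<le> (cmod B / 2) * \<bar>real_of_int k\<bar>" unfolding m by (intro mult_right_mono) auto
  moreover have "m \<le> M / 2" unfolding m using M by simp
  ultimately have "m * (real_of_int \<bar>k\<bar> + 1) \<le> cmod B * \<bar>real_of_int k\<bar> / 2 + M / 2"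
    by (simp add: algebra_simps)
  thus ?thesis using h1 h2 by simp
qed

lemma chain3a:
  assumes evod: "ev = 0" "od = 0" and K: "s - 4 - 2 * io \<noteq> 0" and M: "M \<ge> 3"
  shows "\<exists>lam ch m. CH ev od io s M lam ch m"
proof -
  define B where "B = csqrt (complex_of_real (s - 4 - 2 * io))"
  have B2: "B^2 = complex_of_real s - 4 - 2 * complex_of_real io" by (simp add: B_def)
  have B0: "B \<noteq> 0" unfolding B_def csqrt_eq_0 of_real_eq_0_iff by (rule K)
  define T where "T = M / cmod B"
  define ch where "ch k = B * zz T k" for k
  define m where "m = min (cmod B) 1 / 2"
  have D: "Dk ev od k = 0" for k using evod by (simp add: Dk_def)
  have C1: "ch (k+1) + ch (k-1) = 2 * ch k - Dk ev od (k+1)" for k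
    unfolding ch_def zz_suc D by (simp add: algebra_simps)
  have C2: "2^2 + (ch k)^2 + (ch (k+1))^2 - 2 * ch k * ch (k+1) + complex_of_real io * 2
          + Dk ev od k * ch k + Dk ev od (k+1) * ch (k+1) = complex_of_real s" for k
    unfolding ch_def zz_suc D by (rule alg3_c2[OF B2])
  have C3: "M \<le> cmod (ch k) \<and> m * (real_of_int \<bar>k\<bar> + 1) \<le> cmod (ch k)" for k
    by (rule growth_lin[OF B0 M T_def _ m_def]) (simp add: ch_def norm_mult)
  have "m > 0" using B0 unfolding m_def by simp
  hence "CH ev od io s M 2 ch m" unfolding CH_def using C1 C2 C3 by simp
  thus ?thesis by blast
qed

lemma chain3b:
  assumes evod: "ev = 0" "od = 0" and K: "s - 4 + 2 * io \<noteq> 0" and M: "M \<ge> 3"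
  shows "\<exists>lam ch m. CH ev od io s M lam ch m"
proof -
  define B where "B = csqrt (complex_of_real (s - 4 + 2 * io))"
  have B2: "B^2 = complex_of_real s - 4 + 2 * complex_of_real io" by (simp add: B_def)
  have B0: "B \<noteq> 0" unfolding B_def csqrt_eq_0 of_real_eq_0_iff by (rule K)
  define T where "T = M / cmod B"
  define ch where "ch k = eps k * B * zz T k" for k
  define m where "m = min (cmod B) 1 / 2"
  have D: "Dk ev od k = 0" for k using evod by (simp add: Dk_def)
  have C1: "ch (k+1) + ch (k-1) = (-2) * ch k - Dk ev od (k+1)" for k
    unfolding ch_def zz_suc eps_suc D by (simp add: algebra_simps)
  have C2: "(-2)^2 + (ch k)^2 + (ch (k+1))^2 - (-2) * ch k * ch (k+1) + complex_of_real io * (-2)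
          + Dk ev od k * ch k + Dk ev od (k+1) * ch (k+1) = complex_of_real s" for k
    unfolding ch_def zz_suc eps_suc D by (rule alg4_c2[OF B2 eps_sq])
  have C3: "M \<le> cmod (ch k) \<and> m * (real_of_int \<bar>k\<bar> + 1) \<le> cmod (ch k)" for k
    by (rule growth_lin[OF B0 M T_def _ m_def]) (simp add: ch_def norm_mult eps_norm)
  have "m > 0" using B0 unfolding m_def by simp
  hence "CH ev od io s M (-2) ch m" unfolding CH_def using C1 C2 C3 by simp
  thus ?thesis by blast
qed

lemma chain:
  assumes nz: "\<not> (ev = 0 \<and> od = 0 \<and> io = 0)" and M: "M \<ge> 3"
  shows "\<exists>lam ch m. CH ev od io s M lam ch m"
proof (cases "ev + od = 0")
  case False thus ?thesis using chain1 M by blast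
next
  case True
  show ?thesis
  proof (cases "ev = 0")
    case False thus ?thesis using chain2 True M by blast
  next
    case e0: True
    hence o0: "od = 0" using True by simp
    hence "io \<noteq> 0" using nz e0 by simp
    show ?thesis
    proof (cases "s - 4 - 2 * io = 0")
      case False thus ?thesis using chain3a e0 o0 M by blast
    next
      case True
      hence "s - 4 + 2 * io \<noteq> 0" using \<open>io \<noteq> 0\<close> by linarith
      thus ?thesis using chain3b e0 o0 M by blast
    qed
  qed
qed


theorem lemma5p2:
  fixes p q r s :: real and Cr :: "region \<Rightarrow> nat" and Ce :: "region set \<Rightarrow> nat"
  assumes "valid_coloring Cr Ce"
    and "(p, q, r) \<noteq> (0, 0, 0)"
  shows "\<exists>\<phi>. markoff_map Cr Ce (complex_of_real p) (complex_of_real q) (complex_of_real r)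
               (complex_of_real s) \<phi> \<and>
             finite {X \<in> Omega. cmod (\<phi> X) \<le> 2 + max (max \<bar>p\<bar> \<bar>q\<bar>) \<bar>r\<bar> / 2}"
proof -
  note vc = assms(1)
  define c0 where "c0 = Cr (1,0)"
  define c1 where "c1 = Cr (0,1)"
  define c2 where "c2 = Cr (1,1)"
  have er: "edge_rel {(1,0),(0,1)} (1,0) (0,1) (1,1) (-1,1)"
    by (simp add: edge_rel_def Omega_iff adj_def radd_def rsub_def normr_def)
  have cd: "c2 \<noteq> c0" "c2 \<noteq> c1" "c0 \<noteq> c1"
    using vc er unfolding valid_coloring_def c0_def c1_def c2_def by metis+
  have cin: "c0 \<in> {1,2,3}" "c1 \<in> {1,2,3}" "c2 \<in> {1,2,3}"
    using vc unfolding valid_coloring_def c0_def c1_def c2_def by (auto simp: Omega_iff)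
  have step: "Cr (k+2,1) = Cr (k,1)" for k
  proof -
    have "edge_rel {(1,0),(k+1,1)} (1,0) (k+1,1) (k+2,1) (k,1)"
      by (simp add: edge_rel_def Omega_iff adj_def radd_def rsub_def normr_def)
    thus ?thesis using vc unfolding valid_coloring_def by metis
  qed
  define f where "f k = (if even k then c1 else c2)" for k :: int
  have f2: "f (k+2) = f k" "f (k - 1) = f (k + 1)" for k by (simp_all add: f_def)
  have "Cr (i,1) = f i \<and> Cr (i+1,1) = f (i+1)" for i
  proof (induction i rule: int_induct[where k=0])
    case base thus ?case by (simp add: f_def c1_def c2_def)
  next
    case (step1 i)
    thus ?case using step[of i] f2(1)[of i] by (simp add: add.assoc)
  next
    case (step2 i)
    have e: "i - 1 + 2 = i + 1" by simp
    have "Cr (i - 1, 1) = Cr (i + 1, 1)" using step[of "i - 1"] unfolding e by simp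
    thus ?case using step2 f2(2)[of i] by simp
  qed
  hence par: "Cr (k,1) = f k" for k by simp
  define ev where "ev = rcf p q r c1"
  define od where "od = rcf p q r c2"
  define io where "io = rcf p q r c0"
  have mem: "j \<in> {c0,c1,c2}" if "j \<in> {1,2,3}" for j
    using that cd cin by auto
  have nz: "\<not> (ev = 0 \<and> od = 0 \<and> io = 0)"
  proof
    assume z: "ev = 0 \<and> od = 0 \<and> io = 0"
    have rz: "rcf p q r j = 0" if "j \<in> {1,2,3}" for j
    proof -
      have "j = c0 \<or> j = c1 \<or> j = c2" using mem[OF that] by simp
      thus ?thesis using z unfolding ev_def od_def io_def by auto
    qed
    have "p = rcf p q r 1" "q = rcf p q r 2" "r = rcf p q r 3" by (simp_all add: rcf_def)
    hence "p = 0" "q = 0" "r = 0" using rz[of 1] rz[of 2] rz[of 3] by simp_all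
    thus False using assms(2) by simp
  qed
  define M where "M = 3 + \<bar>p\<bar> + \<bar>q\<bar> + \<bar>r\<bar>"
  have M3: "M \<ge> 3" unfolding M_def by simp
  obtain lam ch m where CH: "CH ev od io s M lam ch m" using chain[OF nz M3] by blast
  have Dk: "Dk ev od k = complex_of_real (rcf p q r (Cr (k,1)))" for k
    by (simp add: Dk_def par f_def ev_def od_def)
  have io: "rcf p q r (Cr (1,0)) = io" by (simp add: io_def c0_def)
  interpret mk Cr Ce p q r s lam ch M m
  proof
    show "valid_coloring Cr Ce" by (rule vc)
    show "cmod lam \<le> 2" using CH by (simp add: CH_def)
    show "3 + \<bar>p\<bar> + \<bar>q\<bar> + \<bar>r\<bar> \<le> M" by (simp add: M_def)
    show "0 < m" using CH by (simp add: CH_def)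
    show "ch (k + 1) + ch (k - 1) = lam * ch k - complex_of_real (rcf p q r (Cr (k + 1, 1)))" for k
      using CH Dk[of "k+1"] by (simp add: CH_def)
    show "lam\<^sup>2 + (ch k)\<^sup>2 + (ch (k + 1))\<^sup>2 - lam * ch k * ch (k + 1) +
          complex_of_real (rcf p q r (Cr (1, 0))) * lam + complex_of_real (rcf p q r (Cr (k, 1))) * ch k +
          complex_of_real (rcf p q r (Cr (k + 1, 1))) * ch (k + 1) = complex_of_real s" for k
    proof -
      have c2all: "lam^2 + (ch k)^2 + (ch (k+1))^2 - lam * ch k * ch (k+1) + complex_of_real io * lam
          + Dk ev od k * ch k + Dk ev od (k+1) * ch (k+1) = complex_of_real s"
        using CH unfolding CH_def by blast
      thus ?thesis unfolding Dk io .
    qed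
    show "M \<le> cmod (ch k) \<and> m * (real_of_int \<bar>k\<bar> + 1) \<le> cmod (ch k)" for k
      using CH by (simp add: CH_def)
  qed
  show ?thesis by (rule main)
qed

end
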